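(* Let $A \subseteq \mathbb{N}$ be an arbitrary normal set. Then there exist $x,y,u,v \in A$ such that $x^2 + y^2$ is the square of a natural number and $u^2 - v^2$ is the square of a natural number.
   Context: $\mathbb{N} = \{1,2,3,\dots\}$. An infinite binary sequence $(\lambda_i)_{i \ge 1}$ is called normal if every finite binary word $\omega$ of length $|\omega|$ occurs in the sequence with asymptotic frequency $2^{-|\omega|}$, i.e. the number of $i \le N$ with $(\lambda_i,\dots,\lambda_{i+|\omega|-1}) = \omega$, divided by $N$, tends to $2^{-|\omega|}$ as $N \to \infty$. A set $B \subseteq \mathbb{N}$ is called normal if its indicator sequence ($\lambda_i = 1$ iff $i \in B$) is normal. *)

theory Defs
  imports "HOL-Analysis.Analysis"
begin

text \<open>Positions are indexed from 1 (the paper's convention N = {1,2,3,...}).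
  The word w occurs at position i if lam (i + j) = w ! j for all j < length w.\<close>

definition occ_count :: "(nat \<Rightarrow> bool) \<Rightarrow> bool list \<Rightarrow> nat \<Rightarrow> nat" where
  "occ_count lam w N = card {i \<in> {1..N}. \<forall>j < length w. lam (i + j) = w ! j}"

definition normal_seq :: "(nat \<Rightarrow> bool) \<Rightarrow> bool" where
  "normal_seq lam \<longleftrightarrow>
     (\<forall>w :: bool list. (\<lambda>N. real (occ_count lam w N) / real N)
        \<longlonglongrightarrow> (1 / 2) ^ length w)"

definition normal_set :: "nat set \<Rightarrow> bool" where
  "normal_set B \<longleftrightarrow> B \<subseteq> {1..} \<and> normal_seq (\<lambda>i. i \<in> B)"

end

theory Submission imports Defs begin

definition Wd :: "nat \<Rightarrow> bool list set" where "Wd n = {w. length w = n}"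

lemma finite_Wd: "finite (Wd n)"
  using finite_lists_length_eq[of "UNIV::bool set" n] by (simp add: Wd_def)

lemma Wd_Suc: "Wd (Suc n) = (\<lambda>w. True # w) ` Wd n \<union> (\<lambda>w. False # w) ` Wd n"
  unfolding Wd_def by (auto simp: length_Suc_conv)

lemma sum_Wd_Suc:
  fixes f :: "bool list \<Rightarrow> real"
  shows "sum f (Wd (Suc n)) = (\<Sum>w\<in>Wd n. f (True # w) + f (False # w))"
proof -
  have "sum f (Wd (Suc n)) = sum f ((\<lambda>w. True # w) ` Wd n) + sum f ((\<lambda>w. False # w) ` Wd n)"
    unfolding Wd_Suc by (rule sum.union_disjoint) (auto intro: finite_Wd)
  also have "\<dots> = (\<Sum>w\<in>Wd n. f (True # w)) + (\<Sum>w\<in>Wd n. f (False # w))"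
    by (simp add: sum.reindex inj_on_def)
  finally show ?thesis by (simp add: sum.distrib)
qed

definition ee :: "bool \<Rightarrow> real" where "ee x = (if x then -1/2 else 1/2)"

definition DD :: "(nat \<Rightarrow> real) \<Rightarrow> bool list \<Rightarrow> real" where
  "DD \<phi> w = (\<Sum>t<length w. \<phi> t * ee (w ! t))"

lemma DD_Cons: "DD \<phi> (x # w) = \<phi> 0 * ee x + DD (\<lambda>t. \<phi> (Suc t)) w"
  unfolding DD_def length_Cons sum.lessThan_Suc_shift by simp

lemma var_DD: "(\<Sum>w\<in>Wd n. (DD \<phi> w)\<^sup>2) = 2^n * (\<Sum>t<n. (\<phi> t)\<^sup>2) / 4"
proof (induction n arbitrary: \<phi>)
  case 0
  then show ?case by (simp add: Wd_def DD_def)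
next
  case (Suc n)
  have "(\<Sum>w\<in>Wd (Suc n). (DD \<phi> w)\<^sup>2) =
     (\<Sum>w\<in>Wd n. (\<phi> 0)\<^sup>2 / 2 + 2 * (DD (\<lambda>t. \<phi> (Suc t)) w)\<^sup>2)"
    unfolding sum_Wd_Suc DD_Cons by (rule sum.cong) (auto simp: ee_def power2_eq_square algebra_simps)
  also have "\<dots> = card (Wd n) * (\<phi> 0)\<^sup>2 / 2 + 2 * (2^n * (\<Sum>t<n. (\<phi> (Suc t))\<^sup>2) / 4)"
    by (simp add: sum.distrib sum_distrib_left[symmetric] Suc.IH)
  also have "card (Wd n) = (2::nat)^n"
    using card_lists_length_eq[of "UNIV::bool set" n] by (simp add: Wd_def)
  finally show ?case unfolding sum.lessThan_Suc_shift by (simp add: algebra_simps)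
qed


definition phi :: "nat \<Rightarrow> nat \<Rightarrow> nat \<Rightarrow> real" where
  "phi c s t = of_bool (c dvd (s + t))"

definition Win :: "(nat \<Rightarrow> bool) \<Rightarrow> nat \<Rightarrow> nat \<Rightarrow> bool list" where
  "Win lam L i = map (\<lambda>t. lam (i + t)) [0..<L]"

definition GG :: "nat \<Rightarrow> nat \<Rightarrow> bool list \<Rightarrow> real" where
  "GG c q w = (q + 1) / 2 + (\<Sum>s<c. \<bar>DD (phi c s) w\<bar>)"

lemma card_mod_class:
  assumes c: "0 < c" and s: "s < c"
  shows "card {t. t < c * q \<and> c dvd (s + t)} \<le> q + 1"
proof -
  have "inj_on (\<lambda>t. (s + t) div c) {t. t < c * q \<and> c dvd (s + t)}"
  proof (rule inj_onI)
    fix x y assume x: "x \<in> {t. t < c * q \<and> c dvd (s + t)}" and y: "y \<in> {t. t < c * q \<and> c dvd (s + t)}"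
      and e: "(s + x) div c = (s + y) div c"
    have "s + x = c * ((s + x) div c)" using x by simp
    also have "\<dots> = c * ((s + y) div c)" using e by simp
    also have "\<dots> = s + y" using y by simp
    finally show "x = y" by simp
  qed
  moreover have "(\<lambda>t. (s + t) div c) ` {t. t < c * q \<and> c dvd (s + t)} \<subseteq> {..<q+1}"
  proof
    fix z assume "z \<in> (\<lambda>t. (s + t) div c) ` {t. t < c * q \<and> c dvd (s + t)}"
    then obtain t where t: "t < c * q" and z: "z = (s + t) div c" by auto
    have "s + t < (q + 1) * c" using t s by (simp add: algebra_simps)
    then show "z \<in> {..<q+1}" using z by (simp add: less_mult_imp_div_less)
  qed
  ultimately show ?thesis
    by (metis (no_types, lifting) card_inj_on_le card_lessThan finite_lessThan)
qed

lemma sum_phi_le: "0 < c \<Longrightarrow> s < c \<Longrightarrow> (\<Sum>t<c * q. phi c s t) \<le> q + 1"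
proof -
  assume c: "0 < c" and s: "s < c"
  have "(\<Sum>t<c * q. phi c s t) = real (card ({..<c*q} \<inter> {t. c dvd (s + t)}))"
    unfolding phi_def by simp
  also have "{..<c*q} \<inter> {t. c dvd (s + t)} = {t. t < c * q \<and> c dvd (s + t)}" by auto
  finally show ?thesis using card_mod_class[OF c s, where q=q] by simp
qed

lemma sum_phi2_le: "0 < c \<Longrightarrow> s < c \<Longrightarrow> (\<Sum>t<c * q. (phi c s t)\<^sup>2) \<le> q + 1"
  using sum_phi_le[where c=c and q=q and s=s] by (simp add: phi_def power2_eq_square)

lemma abs_le_sq: "0 < a \<Longrightarrow> \<bar>y::real\<bar> \<le> y\<^sup>2 / (2 * a) + a / 2"
proof -
  assume a: "0 < a"
  have "0 \<le> (\<bar>y\<bar> - a)\<^sup>2" by simp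
  then have "2 * a * \<bar>y\<bar> \<le> y\<^sup>2 + a\<^sup>2" by (simp add: power2_eq_square algebra_simps)
  then show ?thesis using a by (simp add: field_simps power2_eq_square)
qed

lemma avg_GG:
  assumes c: "0 < c" and a: "0 < a"
  shows "(\<Sum>w\<in>Wd (c*q). GG c q w) \<le> 2^(c*q) * ((q + 1) / 2 + c * ((q + 1) / (8 * a) + a / 2))"
proof -
  let ?L = "c * q"
  have cardW: "card (Wd ?L) = (2::nat)^?L"
    using card_lists_length_eq[of "UNIV::bool set" ?L] by (simp add: Wd_def)
  have one: "(\<Sum>w\<in>Wd ?L. \<bar>DD (phi c s) w\<bar>) \<le> 2^?L * ((q + 1) / (8 * a) + a / 2)" if s: "s < c" for s
  proof -
    have "(\<Sum>w\<in>Wd ?L. \<bar>DD (phi c s) w\<bar>) \<le> (\<Sum>w\<in>Wd ?L. (DD (phi c s) w)\<^sup>2 / (2 * a) + a / 2)"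
      by (rule sum_mono) (rule abs_le_sq[OF a])
    also have "\<dots> = (\<Sum>w\<in>Wd ?L. (DD (phi c s) w)\<^sup>2) / (2 * a) + 2^?L * a / 2"
      by (simp add: sum.distrib sum_divide_distrib cardW)
    also have "\<dots> = 2^?L * (\<Sum>t<?L. (phi c s t)\<^sup>2) / 4 / (2 * a) + 2^?L * a / 2"
      by (simp add: var_DD)
    also have "\<dots> \<le> 2^?L * (q + 1) / 4 / (2 * a) + 2^?L * a / 2"
      using mult_left_mono[OF sum_phi2_le[OF c s, where q=q], of "2^?L"] a
      by (intro add_right_mono divide_right_mono) (auto simp: algebra_simps)
    finally show ?thesis by (simp add: field_simps)
  qed
  have "(\<Sum>w\<in>Wd ?L. GG c q w) = 2^?L * ((q + 1) / 2) + (\<Sum>s<c. \<Sum>w\<in>Wd ?L. \<bar>DD (phi c s) w\<bar>)"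
    unfolding GG_def by (simp add: sum.distrib cardW sum.swap[of _ "Wd ?L"])
  also have "\<dots> \<le> 2^?L * ((q + 1) / 2) + (\<Sum>s<c. 2^?L * ((q + 1) / (8 * a) + a / 2))"
    by (intro add_left_mono sum_mono one) simp
  finally show ?thesis by (simp add: algebra_simps)
qed

lemma cnt_le_GG:
  assumes c: "0 < c"
  shows "(\<Sum>t<c*q. of_bool (c dvd (i + t) \<and> \<not> lam (i + t))) \<le> GG c q (Win lam (c*q) i)"
proof -
  let ?L = "c * q"
  define s where "s = i mod c"
  have s: "s < c" using c by (simp add: s_def)
  have dv: "c dvd (i + t) \<longleftrightarrow> c dvd (s + t)" for t
    by (simp add: s_def dvd_eq_mod_eq_0 mod_add_left_eq)
  have "(\<Sum>t<?L. of_bool (c dvd (i + t) \<and> \<not> lam (i + t)) :: real)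
      = (\<Sum>t<?L. phi c s t * (1/2 + ee (lam (i + t))))"
    by (rule sum.cong) (auto simp: dv phi_def ee_def)
  also have "\<dots> = (\<Sum>t<?L. phi c s t) / 2 + DD (phi c s) (Win lam ?L i)"
    by (simp add: DD_def Win_def algebra_simps sum.distrib sum_divide_distrib)
  also have "\<dots> \<le> (q + 1) / 2 + \<bar>DD (phi c s) (Win lam ?L i)\<bar>"
    using sum_phi_le[OF c s, where q=q]
    by (intro add_mono divide_right_mono) auto
  also have "\<bar>DD (phi c s) (Win lam ?L i)\<bar> \<le> (\<Sum>s<c. \<bar>DD (phi c s) (Win lam ?L i)\<bar>)"
    using s by (intro member_le_sum) auto
  finally show ?thesis unfolding GG_def by (simp add: ac_simps)
qed


lemma Win_eq_iff: "length w = L \<Longrightarrow> (Win lam L i = w) \<longleftrightarrow> (\<forall>j<length w. lam (i + j) = w ! j)"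
  unfolding Win_def by (auto simp: list_eq_iff_nth_eq)

lemma Win_in: "Win lam L i \<in> Wd L"
  by (simp add: Win_def Wd_def)

lemma occ_sum:
  fixes f :: "bool list \<Rightarrow> real"
  shows "(\<Sum>w\<in>Wd L. real (occ_count lam w M) * f w) = (\<Sum>i\<in>{1..M}. f (Win lam L i))"
proof -
  have "(\<Sum>w\<in>Wd L. real (occ_count lam w M) * f w)
      = (\<Sum>w\<in>Wd L. \<Sum>i\<in>{1..M}. of_bool (Win lam L i = w) * f w)"
  proof (rule sum.cong)
    fix w assume w: "w \<in> Wd L"
    have "{i \<in> {1..M}. \<forall>j<length w. lam (i + j) = w ! j} = {1..M} \<inter> {i. Win lam L i = w}"
      using w Win_eq_iff[of w L lam] by (auto simp: Wd_def)
    then show "real (occ_count lam w M) * f w = (\<Sum>i\<in>{1..M}. of_bool (Win lam L i = w) * f w)"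
      by (simp add: occ_count_def sum_distrib_right[symmetric])
  qed simp
  also have "\<dots> = (\<Sum>i\<in>{1..M}. \<Sum>w\<in>Wd L. of_bool (Win lam L i = w) * f w)"
    by (rule sum.swap)
  also have "\<dots> = (\<Sum>i\<in>{1..M}. f (Win lam L i))"
  proof (rule sum.cong)
    fix i
    have "(\<Sum>w\<in>Wd L. of_bool (Win lam L i = w) * f w) = (\<Sum>w\<in>Wd L \<inter> {w. Win lam L i = w}. f w)"
      using finite_Wd by simp
    also have "Wd L \<inter> {w. Win lam L i = w} = {Win lam L i}" using Win_in by auto
    finally show "(\<Sum>w\<in>Wd L. of_bool (Win lam L i = w) * f w) = f (Win lam L i)" by simp
  qed simp
  finally show ?thesis .
qed

lemma double_count:
  fixes f :: "nat \<Rightarrow> real"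
  assumes f0: "\<And>j. 0 \<le> f j" and f1: "\<And>j. f j \<le> 1"
  shows "real L * (\<Sum>j\<in>{1..M}. f j) \<le> real L * real L + (\<Sum>i\<in>{1..M}. \<Sum>t<L. f (i + t))"
proof -
  have one: "(\<Sum>j\<in>{1..M}. f j) \<le> real L + (\<Sum>i\<in>{1..M}. f (i + t))" if t: "t < L" for t
  proof -
    have "(\<Sum>j\<in>{1..M}. f j) \<le> (\<Sum>j\<in>{1..t} \<union> {1+t..M+t}. f j)"
      by (rule sum_mono2) (auto simp: f0)
    also have "\<dots> = (\<Sum>j\<in>{1..t}. f j) + (\<Sum>j\<in>{1+t..M+t}. f j)"
      by (rule sum.union_disjoint) auto
    also have "(\<Sum>j\<in>{1..t}. f j) \<le> (\<Sum>j\<in>{1..t}. 1)" by (rule sum_mono) (rule f1)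
    also have "(\<Sum>j\<in>{1+t..M+t}. f j) = (\<Sum>i\<in>{1..M}. f (i + t))"
      by (rule sum.shift_bounds_cl_nat_ivl)
    finally show ?thesis using t by simp
  qed
  have "real L * (\<Sum>j\<in>{1..M}. f j) = (\<Sum>t<L. \<Sum>j\<in>{1..M}. f j)" by simp
  also have "\<dots> \<le> (\<Sum>t<L. real L + (\<Sum>i\<in>{1..M}. f (i + t)))"
    by (rule sum_mono) (rule one, simp)
  also have "\<dots> = real L * real L + (\<Sum>i\<in>{1..M}. \<Sum>t<L. f (i + t))"
    by (simp add: sum.distrib sum.swap[of _ "{..<L}"])
  finally show ?thesis .
qed


lemma card_mult_eq:
  fixes lam :: "nat \<Rightarrow> bool" and c N :: nat
  assumes c: "0 < c"
  shows "card {k \<in> {1..N}. \<not> lam (c * k)} = card ({1..c*N} \<inter> {j. c dvd j \<and> \<not> lam j})"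
proof -
  have "{1..c*N} \<inter> {j. c dvd j \<and> \<not> lam j} = (\<lambda>k. c * k) ` {k \<in> {1..N}. \<not> lam (c * k)}"
  proof
    show "{1..c*N} \<inter> {j. c dvd j \<and> \<not> lam j} \<subseteq> (\<lambda>k. c * k) ` {k \<in> {1..N}. \<not> lam (c * k)}"
    proof
      fix j assume j: "j \<in> {1..c*N} \<inter> {j. c dvd j \<and> \<not> lam j}"
      then obtain k where k: "j = c * k" by auto
      have "k \<noteq> 0"
      proof
        assume "k = 0"
        then have "j = 0" using k by simp
        then show False using j by simp
      qed
      then have "1 \<le> k" by simp
      moreover have "k \<le> N" using j k c by auto
      ultimately show "j \<in> (\<lambda>k. c * k) ` {k \<in> {1..N}. \<not> lam (c * k)}" using j k by auto
    qed
    show "(\<lambda>k. c * k) ` {k \<in> {1..N}. \<not> lam (c * k)} \<subseteq> {1..c*N} \<inter> {j. c dvd j \<and> \<not> lam j}"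
      using c by auto
  qed
  moreover have "inj_on (\<lambda>k. c * k) {k \<in> {1..N}. \<not> lam (c * k)}" using c by (auto simp: inj_on_def)
  ultimately show ?thesis by (simp add: card_image)
qed

lemma density_bound:
  assumes nl: "normal_seq lam" and c: "0 < c" and e0: "0 < \<epsilon>" and e1: "\<epsilon> \<le> 1"
  shows "\<exists>N0. \<forall>N\<ge>N0. real (card {k \<in> {1..N}. \<not> lam (c * k)}) \<le> (1/2 + \<epsilon>) * real N"
proof -
  define q :: nat where "q = nat \<lceil>real c ^ 2 / \<epsilon>^2 + 8 / \<epsilon>\<rceil> + 1"
  have q1: "real c ^ 2 / \<epsilon>^2 + 8 / \<epsilon> \<le> real q" unfolding q_def by linarith
  have qpos: "0 < q" unfolding q_def by simp
  define Q :: real where "Q = real q + 1"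
  define a :: real where "a = \<epsilon> * Q / (2 * c)"
  define L where "L = c * q"
  have Lpos: "0 < L" using c qpos by (simp add: L_def)
  have apos: "0 < a" using e0 c by (simp add: a_def Q_def)
  have cq: "real c ^ 2 \<le> \<epsilon>^2 * Q"
  proof -
    have "real c ^ 2 / \<epsilon>^2 \<le> Q" using q1 e0 unfolding Q_def
      by (smt (verit) divide_nonneg_nonneg)
    then show ?thesis using e0 by (simp add: field_simps)
  qed
  have avg0: "(\<Sum>w\<in>Wd L. GG c q w) \<le> 2^L * ((real q + 1) / 2 + c * ((real q + 1) / (8 * a) + a / 2))"
    using avg_GG[OF c apos, of q] by (simp add: L_def)
  have key: "Q / 2 + c * (Q / (8 * a) + a / 2) \<le> Q * (1/2 + \<epsilon>/2)"
  proof -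
    have Qp: "0 < Q" unfolding Q_def by simp
    have "c * (Q / (8 * a)) = c^2 / (4 * \<epsilon>)" using c e0 Qp unfolding a_def
      by (simp add: field_simps power2_eq_square)
    moreover have "c * (a / 2) = \<epsilon> * Q / 4" using c unfolding a_def by (simp add: field_simps)
    moreover have "c^2 / (4 * \<epsilon>) \<le> \<epsilon> * Q / 4" using cq e0
      by (simp add: field_simps power2_eq_square)
    ultimately show ?thesis by (simp add: algebra_simps)
  qed
  have Qp: "0 < Q" unfolding Q_def by simp
  define B where "B = Q * (1/2 + 3 * \<epsilon> / 4)"
  have avg: "(1/2)^L * (\<Sum>w\<in>Wd L. GG c q w) < B"
  proof -
    have "(1/2)^L * (\<Sum>w\<in>Wd L. GG c q w) \<le> (1/2)^L * (2^L * (Q / 2 + c * (Q / (8 * a) + a / 2)))"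
      using avg0 unfolding Q_def by (intro mult_left_mono) auto
    also have "\<dots> = Q / 2 + c * (Q / (8 * a) + a / 2)" by (simp add: power_divide)
    also have "\<dots> \<le> Q * (1/2 + \<epsilon>/2)" by (rule key)
    also have "\<dots> < B" unfolding B_def using e0 Qp by (simp add: algebra_simps)
    finally show ?thesis .
  qed
  have lim: "(\<lambda>M. \<Sum>w\<in>Wd L. real (occ_count lam w M) / real M * GG c q w)
      \<longlonglongrightarrow> (\<Sum>w\<in>Wd L. (1/2)^L * GG c q w)"
  proof (rule tendsto_sum)
    fix w assume "w \<in> Wd L"
    then have "length w = L" by (simp add: Wd_def)
    then show "(\<lambda>M. real (occ_count lam w M) / real M * GG c q w) \<longlonglongrightarrow> (1/2)^L * GG c q w"
    proof -
      have h: "(\<lambda>M. real (occ_count lam w M) / real M) \<longlonglongrightarrow> (1/2)^L"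
        using nl \<open>length w = L\<close> unfolding normal_seq_def by metis
      show ?thesis by (rule tendsto_mult_right[OF h])
    qed
  qed
  have "(\<Sum>w\<in>Wd L. (1/2)^L * GG c q w) < B"
    using avg by (simp add: sum_distrib_left)
  then have "eventually (\<lambda>M. (\<Sum>w\<in>Wd L. real (occ_count lam w M) / real M * GG c q w) < B) sequentially"
    using lim order_tendstoD(2) by blast
  then obtain M0 where M0: "\<And>M. M \<ge> M0 \<Longrightarrow> (\<Sum>w\<in>Wd L. real (occ_count lam w M) / real M * GG c q w) < B"
    by (auto simp: eventually_sequentially)
  define N0 where "N0 = max M0 (nat \<lceil>32 * L / \<epsilon>\<rceil>) + 1"
  show ?thesis
  proof (intro exI allI impI)
    fix N assume N: "N0 \<le> N"
    define M where "M = c * N"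
    have NM: "N \<le> M" using c by (simp add: M_def)
    have Mpos: "0 < M" using N NM by (simp add: N0_def)
    have LN: "32 * real L / \<epsilon> \<le> real N" using N unfolding N0_def by linarith
    then have LN': "real L \<le> \<epsilon> * real N / 32" using e0 by (simp add: field_simps)
    have sumG: "(\<Sum>i\<in>{1..M}. GG c q (Win lam L i)) < real M * B"
    proof -
      have "(\<Sum>i\<in>{1..M}. GG c q (Win lam L i)) = (\<Sum>w\<in>Wd L. real (occ_count lam w M) * GG c q w)"
        by (rule occ_sum[symmetric])
      also have "\<dots> = real M * (\<Sum>w\<in>Wd L. real (occ_count lam w M) / real M * GG c q w)"
        using Mpos by (simp add: sum_distrib_left)
      also have "\<dots> < real M * B" using M0[of M] N NM Mpos unfolding N0_def by simp
      finally show ?thesis .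
    qed
    define f where "f j = (of_bool (c dvd j \<and> \<not> lam j) :: real)" for j
    have Z: "real (card {k \<in> {1..N}. \<not> lam (c * k)}) = (\<Sum>j\<in>{1..M}. f j)"
      unfolding f_def M_def card_mult_eq[OF c] by simp
    have "real L * (\<Sum>j\<in>{1..M}. f j) \<le> real L * real L + (\<Sum>i\<in>{1..M}. \<Sum>t<L. f (i + t))"
      by (rule double_count) (auto simp: f_def)
    also have "(\<Sum>i\<in>{1..M}. \<Sum>t<L. f (i + t)) \<le> (\<Sum>i\<in>{1..M}. GG c q (Win lam L i))"
      unfolding f_def L_def by (rule sum_mono) (rule cnt_le_GG[OF c])
    finally have "real L * (\<Sum>j\<in>{1..M}. f j) < real L * real L + real M * B"
      using sumG by linarith
    moreover have "real L * (real N * (Q / q) * (1/2 + 3 * \<epsilon> / 4)) = real M * B"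
      using qpos unfolding M_def B_def L_def by (simp add: field_simps)
    ultimately have "real L * (\<Sum>j\<in>{1..M}. f j) < real L * (real L + real N * (Q / q) * (1/2 + 3 * \<epsilon> / 4))"
      by (simp add: distrib_left)
    then have Zb: "(\<Sum>j\<in>{1..M}. f j) < real L + real N * (Q / q) * (1/2 + 3 * \<epsilon> / 4)"
      using Lpos by (simp add: mult_less_cancel_left_pos)
    have Qq: "Q / q \<le> 1 + \<epsilon> / 8"
    proof -
      have "8 / \<epsilon> \<le> real q" using q1 e0 by (smt (verit) divide_nonneg_nonneg zero_le_power2)
      then have "1 / real q \<le> \<epsilon> / 8" using e0 qpos by (simp add: field_simps)
      then show ?thesis unfolding Q_def using qpos by (simp add: field_simps)
    qed
    have "(Q / q) * (1/2 + 3 * \<epsilon> / 4) \<le> (1 + \<epsilon> / 8) * (1/2 + 3 * \<epsilon> / 4)"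
      using Qq e0 by (intro mult_right_mono) auto
    also have "\<dots> \<le> 1/2 + 29 * \<epsilon> / 32"
    proof -
      have "\<epsilon> * \<epsilon> \<le> \<epsilon>" using e0 e1 by (simp add: mult_le_cancel_left1)
      then show ?thesis by (simp add: algebra_simps)
    qed
    finally have "real N * ((Q / q) * (1/2 + 3 * \<epsilon> / 4)) \<le> real N * (1/2 + 29 * \<epsilon> / 32)"
      by (intro mult_left_mono) auto
    then show "real (card {k \<in> {1..N}. \<not> lam (c * k)}) \<le> (1/2 + \<epsilon>) * real N"
      using Z Zb LN' by (simp add: algebra_simps)
  qed
qed


lemma two_of_three:
  fixes lam :: "nat \<Rightarrow> bool" and a b c :: nat
  assumes nl: "normal_seq lam" and a: "0 < a" and b: "0 < b" and c: "0 < c"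
  shows "\<exists>k\<ge>1. (lam (a*k) \<and> lam (b*k)) \<or> (lam (a*k) \<and> lam (c*k)) \<or> (lam (b*k) \<and> lam (c*k))"
proof (rule ccontr)
  assume H: "\<not> ?thesis"
  have e: "(0::real) < 1/12" "(1/12::real) \<le> 1" by auto
  obtain Na where Na: "\<And>N. N \<ge> Na \<Longrightarrow> real (card {k \<in> {1..N}. \<not> lam (a * k)}) \<le> (1/2 + 1/12) * real N"
    using density_bound[OF nl a e] by blast
  obtain Nb where Nb: "\<And>N. N \<ge> Nb \<Longrightarrow> real (card {k \<in> {1..N}. \<not> lam (b * k)}) \<le> (1/2 + 1/12) * real N"
    using density_bound[OF nl b e] by blast
  obtain Nc where Nc: "\<And>N. N \<ge> Nc \<Longrightarrow> real (card {k \<in> {1..N}. \<not> lam (c * k)}) \<le> (1/2 + 1/12) * real N"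
    using density_bound[OF nl c e] by blast
  define N where "N = max Na (max Nb Nc) + 1"
  have cs: "real (card {k \<in> {1..N}. \<not> lam (d * k)}) = (\<Sum>k\<in>{1..N}. of_bool (\<not> lam (d * k)))" for d
  proof -
    have "{k \<in> {1..N}. \<not> lam (d * k)} = {1..N} \<inter> {k. \<not> lam (d * k)}" by auto
    then show ?thesis by simp
  qed
  have "(\<Sum>k\<in>{1..N}. (2::real)) \<le> (\<Sum>k\<in>{1..N}. of_bool (\<not> lam (a * k)) + of_bool (\<not> lam (b * k)) + of_bool (\<not> lam (c * k)))"
  proof (rule sum_mono)
    fix k assume "k \<in> {1..N}"
    then have "1 \<le> k" by simp
    then show "(2::real) \<le> of_bool (\<not> lam (a * k)) + of_bool (\<not> lam (b * k)) + of_bool (\<not> lam (c * k))"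
      using H by auto
  qed
  also have "\<dots> = real (card {k \<in> {1..N}. \<not> lam (a * k)}) + real (card {k \<in> {1..N}. \<not> lam (b * k)})
      + real (card {k \<in> {1..N}. \<not> lam (c * k)})"
    by (simp only: cs sum.distrib)
  also have "\<dots> \<le> 3 * ((1/2 + 1/12) * real N)"
  proof -
    have "Na \<le> N" "Nb \<le> N" "Nc \<le> N" unfolding N_def by auto
    then show ?thesis using Na[of N] Nb[of N] Nc[of N] by linarith
  qed
  finally have "2 * real N \<le> 3 * ((1/2 + 1/12) * real N)" by simp
  moreover have "0 < real N" unfolding N_def by simp
  ultimately show False by simp
qed

theorem mainTheorem6:
  fixes A :: "nat set"
  assumes "normal_set A"
  shows "\<exists>x\<in>A. \<exists>y\<in>A. \<exists>u\<in>A. \<exists>v\<in>A.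
           (\<exists>z::nat. z \<ge> 1 \<and> x^2 + y^2 = z^2) \<and>
           (\<exists>w::nat. w \<ge> 1 \<and> int u^2 - int v^2 = int w^2)"
proof -
  have nl: "normal_seq (\<lambda>i. i \<in> A)" using assms by (simp add: normal_set_def)
  obtain k where k: "k \<ge> 1" and
    hk: "(44*k \<in> A \<and> 117*k \<in> A) \<or> (44*k \<in> A \<and> 240*k \<in> A) \<or> (117*k \<in> A \<and> 240*k \<in> A)"
    using two_of_three[OF nl, of 44 117 240] by auto
  have xy: "\<exists>x\<in>A. \<exists>y\<in>A. \<exists>z::nat. z \<ge> 1 \<and> x^2 + y^2 = z^2"
  proof -
    have e1: "(44*k)^2 + (117*k)^2 = (125*k)^2" by (simp add: power_mult_distrib)
    have e2: "(44*k)^2 + (240*k)^2 = (244*k)^2" by (simp add: power_mult_distrib)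
    have e3: "(117*k)^2 + (240*k)^2 = (267*k)^2" by (simp add: power_mult_distrib)
    have "125 * k \<ge> 1" "244 * k \<ge> 1" "267 * k \<ge> 1" using k by auto
    then show ?thesis using hk e1 e2 e3 by blast
  qed
  obtain m where m: "m \<ge> 1" and
    hm: "(697*m \<in> A \<and> 185*m \<in> A) \<or> (697*m \<in> A \<and> 153*m \<in> A) \<or> (185*m \<in> A \<and> 153*m \<in> A)"
    using two_of_three[OF nl, of 697 185 153] by auto
  have uv: "\<exists>u\<in>A. \<exists>v\<in>A. \<exists>w::nat. w \<ge> 1 \<and> int u^2 - int v^2 = int w^2"
  proof -
    have e1: "int (697*m)^2 - int (185*m)^2 = int (672*m)^2" by (simp add: power_mult_distrib)
    have e2: "int (697*m)^2 - int (153*m)^2 = int (680*m)^2" by (simp add: power_mult_distrib)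
    have e3: "int (185*m)^2 - int (153*m)^2 = int (104*m)^2" by (simp add: power_mult_distrib)
    have "672 * m \<ge> 1" "680 * m \<ge> 1" "104 * m \<ge> 1" using m by auto
    then show ?thesis using hm e1 e2 e3 by blast
  qed
  show ?thesis using xy uv by blast
qed

end
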